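(* Let $L>0$ and let $\alpha,\beta:\mathbb{R}\to\mathbb{R}^2$ be smooth $L$-periodic maps with $\alpha'$ nowhere zero, $\langle\beta,\alpha'\rangle = 0$ and $|\alpha'|^2+|\beta|^2=1$. Let $\gamma(t,s) = \tfrac12(\alpha(s+t)+\alpha(s-t)) + \tfrac12\int_{s-t}^{s+t}\beta(\xi)\,d\xi$, $a=\alpha'+\beta$, $b=\alpha'-\beta$, and let $\psi,\tilde\psi:\mathbb{R}\to\mathbb{R}$ be smooth functions with $a = (\cos\psi,\sin\psi)$ and $b = -(\cos\tilde\psi,\sin\tilde\psi)$. Assume that $\alpha$ has non-zero rotation index and that the curvature $\kappa$ of the curves $s\mapsto \gamma(t,s)$ is always finite (so that in particular, for every $t$, the unit tangent map $s\mapsto \gamma_{,s}(t,s)/|\gamma_{,s}(t,s)|$ extends continuously to all of $\mathbb{R}$). Then $\psi$ and $\tilde\psi$ are either both non-increasing or both non-decreasing.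
   Context: The rotation index of $\alpha$ is the degree of $\alpha'/|\alpha'|$ as a map from $\mathbb{R}/L\mathbb{Z}$ to the unit circle. Note $2\gamma_{,s}(t,s)=a(s+t)+b(s-t)$. *)

theory Defs
  imports "HOL-Analysis.Analysis"
begin

definition smooth_fun :: "(real \<Rightarrow> 'a::real_normed_vector) \<Rightarrow> bool" where
  "smooth_fun f \<longleftrightarrow> (\<exists>D :: nat \<Rightarrow> real \<Rightarrow> 'a. D 0 = f \<and>
      (\<forall>n x. (D n has_vector_derivative D (Suc n) x) (at x)))"

definition periodic_with :: "real \<Rightarrow> (real \<Rightarrow> 'a) \<Rightarrow> bool" where
  "periodic_with L f \<longleftrightarrow> (\<forall>x. f (x + L) = f x)"

definition unit_vec :: "real \<Rightarrow> real^2" where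
  "unit_vec \<theta> = vector [cos \<theta>, sin \<theta>]"

definition det2 :: "real^2 \<Rightarrow> real^2 \<Rightarrow> real" where
  "det2 u v = u$1 * v$2 - u$2 * v$1"

definition oint :: "real \<Rightarrow> real \<Rightarrow> (real \<Rightarrow> real^2) \<Rightarrow> real^2" where
  "oint a b f = (if a \<le> b then integral {a..b} f else - integral {b..a} f)"

text \<open>Rotation index of an L-periodic curve with nowhere vanishing derivative:
  the degree of the unit tangent map, viewed as a map from R/LZ to the circle,
  computed via a continuous angle lift.\<close>
definition rotation_index :: "real \<Rightarrow> (real \<Rightarrow> real^2) \<Rightarrow> int" where
  "rotation_index L \<alpha> = (THE k::int. \<exists>\<theta>::real \<Rightarrow> real. continuous_on UNIV \<theta> \<and>
      (\<forall>x. (1 / norm (vector_derivative \<alpha> (at x))) *\<^sub>R vector_derivative \<alpha> (at x)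
             = unit_vec (\<theta> x)) \<and>
      \<theta> L - \<theta> 0 = 2 * pi * of_int k)"

definition curvature :: "(real \<Rightarrow> real^2) \<Rightarrow> real \<Rightarrow> real" where
  "curvature c s = det2 (vector_derivative c (at s))
                        (vector_derivative (\<lambda>r. vector_derivative c (at r)) (at s))
                   / norm (vector_derivative c (at s)) ^ 3"

end

theory Submission
  imports Defs
begin


lemma comb_int:
  fixes \<beta> :: "real \<Rightarrow> real^2"
  assumes c: "continuous_on UNIV \<beta>" and "x \<le> y" "y \<le> z"
  shows "integral {x..y} \<beta> + integral {y..z} \<beta> = integral {x..z} \<beta>"
  apply (rule Henstock_Kurzweil_Integration.integral_combine[OF assms(2,3)])
  apply (rule integrable_continuous_real)
  using continuous_on_subset[OF c] by blast

lemma oint_add: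
  fixes \<beta> :: "real \<Rightarrow> real^2"
  assumes c: "continuous_on UNIV \<beta>"
  shows "oint a b \<beta> + oint b d \<beta> = oint a d \<beta>"
proof -
  note C = comb_int[OF c]
  show ?thesis
    unfolding oint_def
    apply (cases "a \<le> b"; cases "b \<le> d"; cases "a \<le> d")
    using C[of a b d] C[of a d b] C[of d a b] C[of b a d] C[of b d a] C[of d b a]
    by (auto simp: algebra_simps)
qed

lemma oint_deriv:
  fixes \<beta> :: "real \<Rightarrow> real^2"
  assumes c: "continuous_on UNIV \<beta>"
  shows "((\<lambda>z. oint c z \<beta>) has_vector_derivative \<beta> y) (at y)"
proof -
  have 1: "((\<lambda>u. integral {y-1..u} \<beta>) has_vector_derivative \<beta> y) (at y within {y-1..y+1})"
    by (rule integral_has_vector_derivative) (auto intro: continuous_on_subset[OF c])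
  have 2: "((\<lambda>u. integral {y-1..u} \<beta>) has_vector_derivative \<beta> y) (at y within {y-1<..<y+1})"
    by (rule has_vector_derivative_within_subset[OF 1]) auto
  have 3: "((\<lambda>u. integral {y-1..u} \<beta>) has_vector_derivative \<beta> y) (at y)"
    using 2 has_vector_derivative_within_open[of y "{y-1<..<y+1}"] by auto
  have 4: "((\<lambda>u. oint c (y-1) \<beta> + integral {y-1..u} \<beta>) has_vector_derivative \<beta> y) (at y)"
    using has_vector_derivative_add[OF has_vector_derivative_const 3] by simp
  show ?thesis
  proof (rule has_vector_derivative_transform_within_open[OF 4, of "{y-1<..<y+1}"])
    fix u assume "u \<in> {y-1<..<y+1}"
    then show "oint c (y - 1) \<beta> + integral {y - 1..u} \<beta> = oint c u \<beta>"
      using oint_add[OF c, of c "y-1" u] by (simp add: oint_def)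
  qed auto
qed



definition nv :: "real \<Rightarrow> real^2" where "nv a = vector [- sin a, cos a]"

lemma inner2: "inner (x::real^2) y = x$1 * y$1 + x$2 * y$2"
  by (simp add: inner_vec_def sum_2)

lemma diff_e: "(1/2) *\<^sub>R (unit_vec x - unit_vec y) = sin((x-y)/2) *\<^sub>R nv((x+y)/2)"
proof -
  have 1: "sin ((y-x)/2) = - sin((x-y)/2)" by (metis minus_diff_eq minus_divide_left sin_minus)
  show ?thesis unfolding unit_vec_def nv_def
    by (simp add: vec_eq_iff forall_2 cos_diff_cos sin_diff_sin 1)
qed

lemma inner_nv: "inner (nv a) (nv a) = 1"
  by (simp add: inner2 nv_def power2_eq_square[symmetric])

lemma norm_nv: "norm (nv a) = 1"
  by (simp add: norm_eq_sqrt_inner inner_nv)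

lemma nv_e: "nv a = unit_vec (a + pi/2)" "- nv a = unit_vec (a - pi/2)"
  unfolding unit_vec_def nv_def by (simp_all add: vec_eq_iff forall_2 sin_add cos_add sin_diff cos_diff)

lemma unit_vec_eq: assumes "unit_vec x = unit_vec y" shows "\<exists>m::int. x - y = 2*pi*m"
proof -
  have "cos x = cos y" "sin x = sin y" using assms unfolding unit_vec_def
    by (metis vector_2(1), metis vector_2(2))
  then have "cos (x - y) = 1" by (simp add: cos_diff power2_eq_square[symmetric])
  then show ?thesis by (auto simp: cos_one_2pi_int)
qed



lemma sign_change:
  fixes F :: "real \<Rightarrow> real"
  assumes der: "(F has_real_derivative D) (at s0)" and D: "D \<noteq> 0" and z: "sin (F s0 / 2) = 0"
    and dp: "\<delta> > 0"
  shows "\<exists>s1 s2. \<bar>s1 - s0\<bar> < \<delta> \<and> \<bar>s2 - s0\<bar> < \<delta> \<and> sin (F s1/2) > 0 \<and> sin (F s2/2) < 0"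
proof -
  obtain i :: int where i: "F s0 / 2 = i * pi" using z sin_zero_iff_int2 by blast
  define c where "c = cos (i * pi)"
  have si: "sin (i*pi) = 0" using sin_zero_iff_int2 by blast
  have c2: "c\<^sup>2 = 1" using sin_cos_squared_add[of "i*pi"] si c_def by simp
  have sF: "sin (F s / 2) = c * sin ((F s - F s0)/2)" for s
  proof -
    have "F s / 2 = i*pi + (F s - F s0)/2" using i by (simp add: field_simps)
    then show ?thesis by (subst \<open>F s / 2 = _\<close>) (simp add: sin_add si c_def)
  qed
  have "isCont F s0" using der by (rule DERIV_isCont)
  then obtain d1 where d1: "d1 > 0" "\<And>s. \<bar>s - s0\<bar> < d1 \<Longrightarrow> \<bar>F s - F s0\<bar> < 2*pi"
    unfolding continuous_at_eps_delta dist_real_def by (metis pi_gt_zero mult_pos_pos zero_less_numeral)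
  have "\<exists>p q. \<bar>p - s0\<bar> < min \<delta> d1 \<and> \<bar>q - s0\<bar> < min \<delta> d1 \<and> F p > F s0 \<and> F q < F s0"
  proof (cases "D > 0")
    case True
    obtain e1 where e1: "e1 > 0" "\<forall>h>0. h < e1 \<longrightarrow> F s0 < F (s0 + h)"
      using DERIV_pos_inc_right[OF der True] by blast
    obtain e2 where e2: "e2 > 0" "\<forall>h>0. h < e2 \<longrightarrow> F (s0 - h) < F s0"
      using DERIV_pos_inc_left[OF der True] by blast
    define h where "h = min (min \<delta> d1) (min e1 e2) / 2"
    have h: "h > 0" "h < min \<delta> d1" "h < e1" "h < e2" using dp d1 e1 e2 by (auto simp: h_def)
    show ?thesis
      by (rule exI[of _ "s0 + h"], rule exI[of _ "s0 - h"]) (use h e1 e2 in auto)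
  next
    case False
    then have Dn: "D < 0" using D by simp
    obtain e1 where e1: "e1 > 0" "\<forall>h>0. h < e1 \<longrightarrow> F s0 < F (s0 - h)"
      using DERIV_neg_dec_left[OF der Dn] by blast
    obtain e2 where e2: "e2 > 0" "\<forall>h>0. h < e2 \<longrightarrow> F s0 > F (s0 + h)"
      using DERIV_neg_dec_right[OF der Dn] by blast
    define h where "h = min (min \<delta> d1) (min e1 e2) / 2"
    have h: "h > 0" "h < min \<delta> d1" "h < e1" "h < e2" using dp d1 e1 e2 by (auto simp: h_def)
    show ?thesis
      by (rule exI[of _ "s0 - h"], rule exI[of _ "s0 + h"]) (use h e1 e2 in auto)
  qed
  then obtain p q where pq: "\<bar>p - s0\<bar> < min \<delta> d1" "\<bar>q - s0\<bar> < min \<delta> d1" "F p > F s0" "F q < F s0"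
    by blast
  have sp: "sin ((F p - F s0)/2) > 0"
    using d1(2)[of p] pq by (intro sin_gt_zero) auto
  have sq: "sin ((F q - F s0)/2) < 0"
  proof -
    have "sin ((F s0 - F q)/2) > 0" using d1(2)[of q] pq by (intro sin_gt_zero) auto
    then show ?thesis by (metis minus_diff_eq minus_divide_left sin_minus neg_less_0_iff_less)
  qed
  show ?thesis
  proof (cases "c > 0")
    case True
    then show ?thesis using pq sp sq sF[of p] sF[of q]
      by (intro exI[of _ p] exI[of _ q]) (auto simp: mult_pos_pos mult_pos_neg)
  next
    case False
    then have "c < 0" using c2 by (cases "c = 0") auto
    then show ?thesis using pq sp sq sF[of p] sF[of q]
      by (intro exI[of _ q] exI[of _ p]) (auto simp: mult_neg_neg mult_neg_pos)
  qed
qed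

lemma sin_interval:
  fixes d :: "real \<Rightarrow> real"
  assumes c: "continuous_on UNIV d" and nz: "\<And>x. sin (d x) \<noteq> 0"
  shows "\<exists>m::int. \<forall>x. m*pi < d x \<and> d x < (m+1)*pi"
proof -
  define m where "m = floor (d 0 / pi)"
  have nk: "d x \<noteq> k * pi" for x and k :: int
    using nz[of x] sin_zero_iff_int2[of "d x"] by metis
  have a1: "m \<le> d 0 / pi" unfolding m_def by (rule of_int_floor_le)
  have a2: "d 0 / pi < m + 1" unfolding m_def using real_of_int_floor_add_one_gt[of "d 0 / pi"] by simp
  have m0: "m * pi \<le> d 0" "d 0 < (m+1)*pi"
    using a1 a2 unfolding pos_le_divide_eq[OF pi_gt_zero] pos_divide_less_eq[OF pi_gt_zero] by simp_all
  have m0': "m * pi < d 0" using m0(1) nk[of 0 m] by linarith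
  have cc: "continuous_on {a..b} d" for a b using continuous_on_subset[OF c] by blast
  have "m*pi < d x \<and> d x < (m+1)*pi" for x
  proof
    show "m*pi < d x"
    proof (rule ccontr)
      assume "\<not> m*pi < d x"
      then have "d x \<le> m * pi" by simp
      then have "\<exists>z. d z = m * pi"
      proof (cases "x \<le> 0")
        case True then show ?thesis
          using IVT'[where f=d and a=x and y="m*pi" and b=0] \<open>d x \<le> m * pi\<close> m0' cc by fastforce
      next
        case False then show ?thesis
          using IVT2'[where f=d and a=0 and b=x and y="m*pi"] \<open>d x \<le> m * pi\<close> m0' cc by fastforce
      qed
      then obtain z where "d z = m * pi" by blast
      then show False using nk[of z m] by simp
    qed
    show "d x < (m+1)*pi"
    proof (rule ccontr)
      assume "\<not> d x < (m+1)*pi"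
      then have "(m+1) * pi \<le> d x" by simp
      then have "\<exists>z. d z = (m+1) * pi"
      proof (cases "0 \<le> x")
        case True then show ?thesis
          using IVT'[where f=d and a=0 and y="(m+1)*pi" and b=x] \<open>(m+1) * pi \<le> d x\<close> m0 cc by fastforce
      next
        case False then show ?thesis
          using IVT2'[where f=d and a=x and b=0 and y="(m+1)*pi"] \<open>(m+1) * pi \<le> d x\<close> m0 cc by fastforce
      qed
      then obtain z where "d z = (m+1) * pi" by blast
      then show False using nk[of z "m+1"] by simp
    qed
  qed
  then show ?thesis by (intro exI[of _ m]) simp
qed



lemma surj_mod:
  fixes f :: "real \<Rightarrow> real"
  assumes c: "continuous_on UNIV f" and L: "L \<ge> 0" and big: "2*pi \<le> \<bar>f L - f 0\<bar>"
  shows "\<exists>u. \<exists>k::int. f u = y + 2*pi*k"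
proof -
  define k0 where "k0 = ceiling ((f 0 - y)/(2*pi))"
  have p: "2*pi > 0" by simp
  have k1: "(f 0 - y)/(2*pi) \<le> k0" unfolding k0_def by simp
  have k2: "k0 \<le> (f 0 - y)/(2*pi) + 1" unfolding k0_def by simp
  have b1: "f 0 \<le> y + 2*pi*k0" using k1 pos_divide_le_eq[OF p] by (simp add: algebra_simps)
  have b2: "y + 2*pi*k0 \<le> f 0 + 2*pi"
  proof -
    have "2*pi*k0 \<le> 2*pi*((f 0 - y)/(2*pi) + 1)" using k2 by (intro mult_left_mono) auto
    also have "\<dots> = f 0 - y + 2*pi" by (simp add: field_simps)
    finally show ?thesis by simp
  qed
  have cc: "continuous_on {0..L} f" using continuous_on_subset[OF c] by blast
  show ?thesis
  proof (cases "f L \<ge> f 0")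
    case True
    then have "f 0 + 2*pi \<le> f L" using big by simp
    then obtain u where "f u = y + 2*pi*k0"
      using IVT'[where f=f and a=0 and b=L and y="y + 2*pi*k0"] b1 b2 L cc by auto
    then show ?thesis by blast
  next
    case False
    then have "f L \<le> f 0 - 2*pi" using big by simp
    then obtain u where "f u = y + 2*pi*(k0-1)"
      using IVT2'[where f=f and a=0 and b=L and y="y + 2*pi*(k0-1)"] b1 b2 L cc
      by (auto simp: algebra_simps)
    then show ?thesis by blast
  qed
qed

lemma cont_int_const:
  fixes g :: "real \<Rightarrow> real"
  assumes c: "continuous_on UNIV g" and i: "\<And>x. g x \<in> \<int>"
  shows "g x = g y"
proof (rule ccontr)
  assume ne: "g x \<noteq> g y"
  have cc: "continuous_on {a..b} g" for a b using continuous_on_subset[OF c] by blast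
  have gap: "\<exists>z. g z = v" if "g a < g b" "g a < v" "v < g b" for a b v
  proof (cases "a \<le> b")
    case True then show ?thesis using IVT'[where f=g and a=a and b=b and y=v] that cc by auto
  next
    case False then show ?thesis using IVT2'[where f=g and a=b and b=a and y=v] that cc by auto
  qed
  obtain m n :: int where mn: "g x = m" "g y = n" using i[of x] i[of y] Ints_cases by metis
  have nh: "g z \<noteq> of_int k + 1/2" for z and k :: int
  proof
    assume h: "g z = of_int k + 1/2"
    obtain j :: int where "g z = j" using i[of z] Ints_cases by metis
    then have "real_of_int (2*j) = real_of_int (2*k + 1)" using h by simp
    then have "2*j = 2*k+1" by linarith
    then show False by presburger
  qed
  show False
  proof (cases "m < n")
    case True
    then show False using gap[of x y "m + 1/2"] mn nh[of _ m] by force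
  next
    case False
    then have "n < m" using ne mn by auto
    then show False using gap[of y x "n + 1/2"] mn nh[of _ n] by force
  qed
qed

lemma first_time:
  fixes f f' :: "real \<Rightarrow> real"
  assumes der: "\<And>x. (f has_real_derivative f' x) (at x)"
    and dep: "\<And>x y. f x = f y \<Longrightarrow> f' x = f' y"
    and ab: "a < b" and fa: "f' a > 0" and fb: "f' b < 0"
  shows False
proof -
  have c: "continuous_on UNIV f" using der by (meson DERIV_isCont continuous_at_imp_continuous_on)
  have cc: "continuous_on {p..q} f" for p q using continuous_on_subset[OF c] by blast
  consider "f a < f b" | "f a > f b" | "f a = f b" by linarith
  then show False
  proof cases
    case 3 then show False using dep[OF 3] fa fb by simp
  next
    case 1
    define S where "S = {t \<in> {a..b}. f t = f b}"
    have Sc: "closed S" unfolding S_def by (rule continuous_closed_preimage_constant[OF cc]) simp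
    have Sne: "b \<in> S" using ab by (auto simp: S_def)
    have Sb: "bdd_below S" unfolding S_def by (rule bdd_belowI[of _ a]) auto
    define \<tau> where "\<tau> = Inf S"
    have tS: "\<tau> \<in> S" unfolding \<tau>_def using closed_contains_Inf[OF _ Sb Sc] Sne by blast
    have tle: "\<tau> \<le> t" if "t \<in> S" for t unfolding \<tau>_def using cInf_lower[OF that Sb] .
    have ta: "a < \<tau>" using tS 1 by (auto simp: S_def order.order_iff_strict)
    have below: "f t < f b" if th: "a \<le> t" "t < \<tau>" for t
    proof (rule ccontr)
      assume "\<not> f t < f b"
      then obtain z where z: "a \<le> z" "z \<le> t" "f z = f b"
        using IVT'[where f=f and a=a and b=t and y="f b"] 1 th cc by force
      then have "z \<in> S" using th tS by (auto simp: S_def)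
      then show False using tle[of z] z th by force
    qed
    have ft: "f' \<tau> < 0" using dep[of \<tau> b] tS fb by (auto simp: S_def)
    obtain d where d: "d > 0" "\<forall>h>0. h < d \<longrightarrow> f \<tau> < f (\<tau> - h)"
      using DERIV_neg_dec_left[OF der ft] by blast
    define h where "h = min d (\<tau> - a) / 2"
    have "h > 0" "h < d" "h \<le> \<tau> - a" using d ta by (auto simp: h_def)
    then have "f \<tau> < f (\<tau> - h)" "f (\<tau> - h) < f b" using d below[of "\<tau> - h"] by auto
    then show False using tS by (auto simp: S_def)
  next
    case 2
    define S where "S = {t \<in> {a..b}. f t = f a}"
    have Sc: "closed S" unfolding S_def by (rule continuous_closed_preimage_constant[OF cc]) simp
    have Sne: "a \<in> S" using ab by (auto simp: S_def)
    have Sb: "bdd_above S" unfolding S_def by (rule bdd_aboveI[of _ b]) auto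
    define \<tau> where "\<tau> = Sup S"
    have tS: "\<tau> \<in> S" unfolding \<tau>_def using closed_contains_Sup[OF _ Sb Sc] Sne by blast
    have tge: "t \<le> \<tau>" if "t \<in> S" for t unfolding \<tau>_def using cSup_upper[OF that Sb] .
    have tb: "\<tau> < b" using tS 2 by (auto simp: S_def order.order_iff_strict)
    have above: "f t < f a" if th: "\<tau> < t" "t \<le> b" for t
    proof (rule ccontr)
      assume "\<not> f t < f a"
      then obtain z where z: "t \<le> z" "z \<le> b" "f z = f a"
        using IVT2'[where f=f and a=t and b=b and y="f a"] 2 th cc by force
      then have "z \<in> S" using th tS by (auto simp: S_def)
      then show False using tge[of z] z th by force
    qed
    have ft: "f' \<tau> > 0" using dep[of \<tau> a] tS fa by (auto simp: S_def)
    obtain d where d: "d > 0" "\<forall>h>0. h < d \<longrightarrow> f \<tau> < f (\<tau> + h)"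
      using DERIV_pos_inc_right[OF der ft] by blast
    define h where "h = min d (b - \<tau>) / 2"
    have "h > 0" "h < d" "h \<le> b - \<tau>" using d tb by (auto simp: h_def)
    then have "f \<tau> < f (\<tau> + h)" "f (\<tau> + h) < f a" using d above[of "\<tau> + h"] by auto
    then show False using tS by (auto simp: S_def)
  qed
qed

lemma sign_const:
  fixes f f' :: "real \<Rightarrow> real"
  assumes der: "\<And>x. (f has_real_derivative f' x) (at x)"
    and dep: "\<And>x y. f x = f y \<Longrightarrow> f' x = f' y"
  shows "(\<forall>x. f' x \<ge> 0) \<or> (\<forall>x. f' x \<le> 0)"
proof (rule ccontr)
  assume "\<not> ?thesis"
  then have "\<exists>a. f' a > 0" "\<exists>b. f' b < 0" by (simp_all add: not_le)
  then obtain a b where ab: "f' a > 0" "f' b < 0" by blast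
  define g where "g = (\<lambda>x. - f x)"
  define g' where "g' = (\<lambda>x. - f' x)"
  have der': "(g has_real_derivative g' x) (at x)" for x
    unfolding g_def g'_def using DERIV_minus[OF der] .
  have dep': "g x = g y \<Longrightarrow> g' x = g' y" for x y using dep[of x y] by (simp add: g_def g'_def)
  have "a \<noteq> b" using ab by auto
  then consider "a < b" | "b < a" by linarith
  then show False
  proof cases
    case 1 show False by (rule first_time[OF der dep 1 ab])
  next
    case 2
    have 3: "g' b > 0" "g' a < 0" using ab by (simp_all add: g'_def)
    show False using first_time[OF der' dep' 2 3] .
  qed
qed



lemma nv_alt: "nv a = (- sin a) *\<^sub>R (vector [1,0] :: real^2) + cos a *\<^sub>R vector [0,1]"
  unfolding nv_def by (simp add: vec_eq_iff forall_2)

lemma nv_cont: "continuous_on UNIV nv"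
  unfolding nv_alt[abs_def] by (intro continuous_intros)

lemma key_C1:
  fixes \<psi> \<psi>t ps' pt' :: "real \<Rightarrow> real" and T G :: "real \<Rightarrow> real^2"
  assumes d1: "\<And>x. (\<psi> has_real_derivative ps' x) (at x)"
    and d2: "\<And>x. (\<psi>t has_real_derivative pt' x) (at x)"
    and Gd: "\<And>s. vector_derivative G (at s) = sin ((\<psi>(s+t) - \<psi>t(s-t))/2) *\<^sub>R nv ((\<psi>(s+t) + \<psi>t(s-t))/2)"
    and Tc: "continuous_on UNIV T"
    and TG: "\<And>s. vector_derivative G (at s) \<noteq> 0 \<Longrightarrow>
               T s = (1 / norm (vector_derivative G (at s))) *\<^sub>R vector_derivative G (at s)"
    and z: "sin ((\<psi>(s0+t) - \<psi>t(s0-t))/2) = 0"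
  shows "ps' (s0+t) = pt' (s0-t)"
proof (rule ccontr)
  assume ne: "ps' (s0+t) \<noteq> pt' (s0-t)"
  define F where "F s = \<psi>(s+t) - \<psi>t(s + (-t))" for s
  have F': "(F has_real_derivative (ps' (s0+t) - pt' (s0-t))) (at s0)"
  proof -
    have "((\<lambda>s. \<psi>(s+t)) has_real_derivative ps' (s0+t)) (at s0)"
      using d1[of "s0+t"] DERIV_shift by blast
    moreover have "((\<lambda>s. \<psi>t(s+(-t))) has_real_derivative pt' (s0-t)) (at s0)"
      using d2[of "s0+(-t)"] DERIV_shift[of \<psi>t "pt' (s0-t)" s0 "-t"] by simp
    ultimately show ?thesis unfolding F_def[abs_def] by (rule DERIV_diff)
  qed
  have Fe: "F s = \<psi>(s+t) - \<psi>t(s-t)" for s by (simp add: F_def)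
  define N where "N s = nv ((\<psi>(s+t) + \<psi>t(s-t))/2)" for s
  define q where "q s = inner (T s) (N s)" for s
  have c1: "continuous_on UNIV \<psi>" "continuous_on UNIV \<psi>t"
    using d1 d2 by (meson DERIV_isCont continuous_at_imp_continuous_on)+
  have "continuous_on UNIV (\<lambda>s. (\<psi>(s+t) + \<psi>t(s-t))/2)"
    by (intro continuous_intros continuous_on_compose2[OF c1(1)] continuous_on_compose2[OF c1(2)]) auto
  then have "continuous_on UNIV N" unfolding N_def[abs_def]
    by (rule continuous_on_compose2[OF nv_cont]) auto
  then have "continuous_on UNIV q" unfolding q_def[abs_def] using Tc by (intro continuous_intros)
  then have "isCont q s0" by (simp add: continuous_on_eq_continuous_at)
  then obtain \<delta> where \<delta>: "\<delta> > 0" "\<And>s. \<bar>s - s0\<bar> < \<delta> \<Longrightarrow> \<bar>q s - q s0\<bar> < 1"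
    unfolding continuous_at_eps_delta dist_real_def by (meson zero_less_one)
  have z': "sin (F s0 / 2) = 0" using z Fe by simp
  obtain s1 s2 where s: "\<bar>s1 - s0\<bar> < \<delta>" "\<bar>s2 - s0\<bar> < \<delta>" "sin (F s1/2) > 0" "sin (F s2/2) < 0"
    using sign_change[OF F' _ z' \<delta>(1)] ne by auto
  have qv: "q s = sgn (sin (F s/2))" if "sin (F s / 2) \<noteq> 0" for s
  proof -
    define h where "h = sin (F s / 2)"
    have G: "vector_derivative G (at s) = h *\<^sub>R N s" by (simp add: Gd h_def Fe N_def)
    have nN: "norm (N s) = 1" by (simp add: N_def norm_nv)
    have iN: "inner (N s) (N s) = 1" by (simp add: N_def inner_nv)
    have "h \<noteq> 0" using that h_def by simp
    then have "vector_derivative G (at s) \<noteq> 0" using G nN by auto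
    then have "T s = (1/\<bar>h\<bar>) *\<^sub>R (h *\<^sub>R N s)" using TG[of s] G nN by simp
    then have "q s = h / \<bar>h\<bar>" by (simp add: q_def iN)
    then show ?thesis using \<open>h \<noteq> 0\<close> h_def by (simp add: sgn_if)
  qed
  have "q s1 = 1" "q s2 = -1" using qv[of s1] qv[of s2] s by auto
  then show False using \<delta>(2)[of s1] \<delta>(2)[of s2] s by linarith
qed



lemma vshift:
  fixes f :: "real \<Rightarrow> 'a::real_normed_vector"
  assumes "(f has_vector_derivative f') (at (x + c))"
  shows "((\<lambda>s. f (s + c)) has_vector_derivative f') (at x)"
proof -
  have "((\<lambda>s. s + c) has_vector_derivative 1) (at x)"
    using has_vector_derivative_add[OF has_vector_derivative_id has_vector_derivative_const] by simp
  from vector_diff_chain_at[OF this] assms show ?thesis by (simp add: o_def)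
qed

lemma half_deriv:
  fixes g :: "real \<Rightarrow> 'a::real_normed_vector"
  assumes "(g has_vector_derivative g') (at x)"
  shows "((\<lambda>s. (1/2) *\<^sub>R g s) has_vector_derivative (1/2) *\<^sub>R g') (at x)"
  using has_vector_derivative_scaleR[OF DERIV_const assms, of "1/2"] by simp

theorem corollary2p8:
  fixes L :: real and \<alpha> \<beta> :: "real \<Rightarrow> real^2" and \<psi> \<psi>tilde :: "real \<Rightarrow> real"
    and \<gamma> :: "real \<Rightarrow> real \<Rightarrow> real^2"
  assumes L_pos: "L > 0"
    and smooth_\<alpha>: "smooth_fun \<alpha>" and smooth_\<beta>: "smooth_fun \<beta>"
    and per_\<alpha>: "periodic_with L \<alpha>" and per_\<beta>: "periodic_with L \<beta>"
    and \<alpha>'_nz: "\<forall>x. vector_derivative \<alpha> (at x) \<noteq> 0"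
    and orth: "\<forall>x. inner (\<beta> x) (vector_derivative \<alpha> (at x)) = 0"
    and norm1: "\<forall>x. (norm (vector_derivative \<alpha> (at x)))\<^sup>2 + (norm (\<beta> x))\<^sup>2 = 1"
    and \<gamma>_def: "\<forall>t s. \<gamma> t s = (1/2) *\<^sub>R (\<alpha> (s + t) + \<alpha> (s - t)) + (1/2) *\<^sub>R oint (s - t) (s + t) \<beta>"
    and smooth_\<psi>: "smooth_fun \<psi>" and smooth_\<psi>tilde: "smooth_fun \<psi>tilde"
    and a_eq: "\<forall>x. vector_derivative \<alpha> (at x) + \<beta> x = unit_vec (\<psi> x)"
    and b_eq: "\<forall>x. vector_derivative \<alpha> (at x) - \<beta> x = - unit_vec (\<psi>tilde x)"
    and rot: "rotation_index L \<alpha> \<noteq> 0"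
    and curv_finite: "\<forall>t s0. \<exists>e>0. \<exists>M. \<forall>s. \<bar>s - s0\<bar> < e \<and> vector_derivative (\<gamma> t) (at s) \<noteq> 0
                         \<longrightarrow> \<bar>curvature (\<gamma> t) s\<bar> \<le> M"
    and tangent_cont: "\<forall>t. \<exists>T :: real \<Rightarrow> real^2. continuous_on UNIV T \<and>
                         (\<forall>s. vector_derivative (\<gamma> t) (at s) \<noteq> 0 \<longrightarrow>
                            T s = (1 / norm (vector_derivative (\<gamma> t) (at s))) *\<^sub>R vector_derivative (\<gamma> t) (at s))"
  shows "(mono \<psi> \<and> mono \<psi>tilde) \<or> (antimono \<psi> \<and> antimono \<psi>tilde)"
proof -
  obtain Da where Da: "Da 0 = \<alpha>" "\<And>n x. (Da n has_vector_derivative Da (Suc n) x) (at x)"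
    using smooth_\<alpha> unfolding smooth_fun_def by blast
  obtain Db where Db: "Db 0 = \<beta>" "\<And>n x. (Db n has_vector_derivative Db (Suc n) x) (at x)"
    using smooth_\<beta> unfolding smooth_fun_def by blast
  obtain Dp where Dp: "Dp 0 = \<psi>" "\<And>n x. (Dp n has_vector_derivative Dp (Suc n) x) (at x)"
    using smooth_\<psi> unfolding smooth_fun_def by blast
  obtain Dq where Dq: "Dq 0 = \<psi>tilde" "\<And>n x. (Dq n has_vector_derivative Dq (Suc n) x) (at x)"
    using smooth_\<psi>tilde unfolding smooth_fun_def by blast
  define ps' where "ps' = Dp 1"
  define pt' where "pt' = Dq 1"
  have dp: "\<And>x. (\<psi> has_real_derivative ps' x) (at x)"
    using Dp(2)[of 0] Dp(1) by (simp add: ps'_def has_real_derivative_iff_has_vector_derivative)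
  have dq: "\<And>x. (\<psi>tilde has_real_derivative pt' x) (at x)"
    using Dq(2)[of 0] Dq(1) by (simp add: pt'_def has_real_derivative_iff_has_vector_derivative)
  have da: "\<And>x. (\<alpha> has_vector_derivative Da 1 x) (at x)" using Da(2)[of 0] Da(1) by simp
  have a'_eq: "\<And>x. vector_derivative \<alpha> (at x) = Da 1 x" using da by (rule vector_derivative_at)
  have cb: "continuous_on UNIV \<beta>"
    using Db(2)[of 0] Db(1) by (metis continuous_at_imp_continuous_on has_vector_derivative_continuous)
  have cp: "continuous_on UNIV \<psi>" "continuous_on UNIV \<psi>tilde"
    using dp dq by (meson DERIV_isCont continuous_at_imp_continuous_on)+
  define P where "P z = oint 0 z \<beta>" for z
  have dP: "\<And>z. (P has_vector_derivative \<beta> z) (at z)" unfolding P_def[abs_def] by (rule oint_deriv[OF cb])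
  have oP: "oint x y \<beta> = P y - P x" for x y
    using oint_add[OF cb, of 0 x y] by (simp add: P_def algebra_simps)
  have gd: "vector_derivative (\<gamma> t) (at s) = sin ((\<psi>(s+t) - \<psi>tilde(s-t))/2) *\<^sub>R nv ((\<psi>(s+t) + \<psi>tilde(s-t))/2)"
    for t s
  proof -
    have ge: "\<gamma> t = (\<lambda>s. (1/2) *\<^sub>R (\<alpha> (s + t) + \<alpha> (s + (-t))) + (1/2) *\<^sub>R (P (s+t) - P (s + (-t))))"
      using \<gamma>_def oP by (auto simp: fun_eq_iff)
    have "((\<lambda>s. (1/2) *\<^sub>R (\<alpha> (s + t) + \<alpha> (s + (-t))) + (1/2) *\<^sub>R (P (s+t) - P (s + (-t))))
       has_vector_derivative ((1/2) *\<^sub>R (Da 1 (s+t) + Da 1 (s + (-t))) + (1/2) *\<^sub>R (\<beta> (s+t) - \<beta> (s + (-t))))) (at s)"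
      by (intro has_vector_derivative_add half_deriv has_vector_derivative_diff vshift da dP)
    then have "vector_derivative (\<gamma> t) (at s) = (1/2) *\<^sub>R (Da 1 (s+t) + Da 1 (s - t)) + (1/2) *\<^sub>R (\<beta> (s+t) - \<beta> (s - t))"
      unfolding ge by (simp add: vector_derivative_at)
    also have "\<dots> = (1/2) *\<^sub>R ((vector_derivative \<alpha> (at (s+t)) + \<beta> (s+t)) + (vector_derivative \<alpha> (at (s-t)) - \<beta> (s-t)))"
      by (simp add: a'_eq algebra_simps)
    also have "\<dots> = (1/2) *\<^sub>R (unit_vec (\<psi> (s+t)) - unit_vec (\<psi>tilde (s-t)))"
      using a_eq b_eq by simp
    finally show ?thesis by (simp add: diff_e)
  qed
  have C1: "ps' u = pt' v" if "sin ((\<psi> u - \<psi>tilde v)/2) = 0" for u v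
  proof -
    obtain T where T: "continuous_on UNIV T" "\<And>s. vector_derivative (\<gamma> ((u-v)/2)) (at s) \<noteq> 0 \<longrightarrow>
           T s = (1 / norm (vector_derivative (\<gamma> ((u-v)/2)) (at s))) *\<^sub>R vector_derivative (\<gamma> ((u-v)/2)) (at s)"
      using tangent_cont by blast
    have uv: "(u+v)/2 + (u-v)/2 = u" "(u+v)/2 - (u-v)/2 = v" by (simp_all add: field_simps)
    have "ps' ((u+v)/2 + (u-v)/2) = pt' ((u+v)/2 - (u-v)/2)"
      by (rule key_C1[OF dp dq gd T(1)]) (use T(2) that uv in auto)
    then show ?thesis by (simp only: uv)
  qed
  have winding: "\<exists>p::int. p \<noteq> (0::int) \<and> \<psi> L - \<psi> 0 = 2*pi*p \<and> \<psi>tilde L - \<psi>tilde 0 = 2*pi*p"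
  proof -
    have per: "Da 1 (x + L) = Da 1 x" for x
    proof -
      have "((\<lambda>s. \<alpha> (s + L)) has_vector_derivative Da 1 (x + L)) (at x)" by (rule vshift) (rule da)
      moreover have "(\<lambda>s. \<alpha> (s + L)) = \<alpha>" using per_\<alpha> by (simp add: periodic_with_def fun_eq_iff)
      ultimately have "(\<alpha> has_vector_derivative Da 1 (x + L)) (at x)" by simp
      then show ?thesis using da vector_derivative_unique_at by blast
    qed
    have bL: "\<beta> L = \<beta> 0" using per_\<beta>[unfolded periodic_with_def, rule_format, of 0] by simp
    have aL: "vector_derivative \<alpha> (at L) = vector_derivative \<alpha> (at 0)"
      using per[of 0] by (simp add: a'_eq)
    have "unit_vec (\<psi> L) = unit_vec (\<psi> 0)" using a_eq[rule_format, of L] a_eq[rule_format, of 0] aL bL by simp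
    then obtain p1 :: int where p1: "\<psi> L - \<psi> 0 = 2*pi*p1" using unit_vec_eq by blast
    have "- unit_vec (\<psi>tilde L) = - unit_vec (\<psi>tilde 0)" using b_eq[rule_format, of L] b_eq[rule_format, of 0] aL bL by simp
    then have "unit_vec (\<psi>tilde L) = unit_vec (\<psi>tilde 0)" by simp
    then obtain p2 :: int where p2: "\<psi>tilde L - \<psi>tilde 0 = 2*pi*p2" using unit_vec_eq by blast
    define d where "d x = (\<psi> x - \<psi>tilde x)/2" for x
    define \<sigma> where "\<sigma> x = (\<psi> x + \<psi>tilde x)/2" for x
    have a'f: "vector_derivative \<alpha> (at x) = sin (d x) *\<^sub>R nv (\<sigma> x)" for x
    proof -
      have "vector_derivative \<alpha> (at x) = (1/2) *\<^sub>R ((vector_derivative \<alpha> (at x) + \<beta> x) + (vector_derivative \<alpha> (at x) - \<beta> x))"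
        by (simp add: algebra_simps)
      also have "\<dots> = (1/2) *\<^sub>R (unit_vec (\<psi> x) - unit_vec (\<psi>tilde x))" using a_eq b_eq by simp
      finally show ?thesis by (simp add: diff_e d_def \<sigma>_def)
    qed
    have snz: "sin (d x) \<noteq> 0" for x
    proof
      assume "sin (d x) = 0"
      then have "vector_derivative \<alpha> (at x) = 0" using a'f[of x] by simp
      then show False using \<alpha>'_nz by blast
    qed
    have cd: "continuous_on UNIV d" unfolding d_def[abs_def] using cp by (intro continuous_intros) auto
    from sin_interval[OF cd snz] obtain m :: int where m0: "\<forall>x. m*pi < d x \<and> d x < (real_of_int m + 1)*pi" ..
    note m = m0[rule_format]
    have "d L - d 0 = ((\<psi> L - \<psi> 0) - (\<psi>tilde L - \<psi>tilde 0))/2" by (simp add: d_def field_simps)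
    also have "\<dots> = pi * (p1 - p2)" unfolding p1 p2 by (simp add: field_simps)
    finally have "d L - d 0 = pi * (p1 - p2)" .
    moreover have "\<bar>d L - d 0\<bar> < pi" using m[of L] m[of 0] by (simp add: algebra_simps abs_less_iff)
    ultimately have "\<bar>real_of_int (p1 - p2)\<bar> < 1" by (simp add: abs_mult)
    then have p12: "p1 = p2" by linarith
    define c where "c = cos (m*pi)"
    have sm: "sin (m*pi) = 0" using sin_zero_iff_int2 by blast
    have c2: "c\<^sup>2 = 1" using sin_cos_squared_add[of "m*pi"] sm c_def by simp
    have cs: "c * sin (d x) > 0" for x
    proof -
      have e: "sin (m*pi + (d x - m*pi)) = c * sin (d x - m*pi)"
        by (simp only: sin_add sm c_def mult_zero_left add_0_left)
      then have "sin (d x) = c * sin (d x - m*pi)" by simp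
      moreover have "sin (d x - m*pi) > 0" using m[of x] by (intro sin_gt_zero) (auto simp: algebra_simps)
      ultimately show ?thesis using c2 by (simp add: power2_eq_square mult.assoc[symmetric])
    qed
    define \<theta> where "\<theta> x = \<sigma> x + c * pi / 2" for x
    have c1: "c = 1 \<or> c = -1" using c2 by (simp add: power2_eq_1_iff)
    have tang: "(1 / norm (vector_derivative \<alpha> (at x))) *\<^sub>R vector_derivative \<alpha> (at x) = unit_vec (\<theta> x)" for x
    proof -
      have "(1 / norm (vector_derivative \<alpha> (at x))) *\<^sub>R vector_derivative \<alpha> (at x)
            = (sin (d x) / \<bar>sin (d x)\<bar>) *\<^sub>R nv (\<sigma> x)" by (simp add: a'f norm_nv)
      also have "\<dots> = unit_vec (\<theta> x)"
        using c1
      proof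
        assume "c = 1"
        then have "sin (d x) > 0" using cs[of x] by simp
        then show ?thesis using \<open>c = 1\<close> by (simp add: \<theta>_def nv_e(1))
      next
        assume "c = -1"
        then have "sin (d x) < 0" using cs[of x] by simp
        then have "(sin (d x) / \<bar>sin (d x)\<bar>) = -1" by simp
        then show ?thesis using \<open>c = -1\<close> nv_e(2)[of "\<sigma> x"] by (simp add: \<theta>_def)
      qed
      finally show ?thesis .
    qed
    have ct: "continuous_on UNIV \<theta>" unfolding \<theta>_def[abs_def] \<sigma>_def[abs_def] using cp by (intro continuous_intros) auto
    have tL: "\<theta> L - \<theta> 0 = 2*pi*p1" using p1 p2 p12 by (simp add: \<theta>_def \<sigma>_def algebra_simps)
    have "rotation_index L \<alpha> = p1"
      unfolding rotation_index_def
    proof (rule the_equality)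
      show "\<exists>\<theta>. continuous_on UNIV \<theta> \<and>
        (\<forall>x. (1 / norm (vector_derivative \<alpha> (at x))) *\<^sub>R vector_derivative \<alpha> (at x) = unit_vec (\<theta> x)) \<and>
        \<theta> L - \<theta> 0 = 2 * pi * real_of_int p1"
        using ct tang tL by blast
    next
      fix k :: int
      assume "\<exists>\<theta>. continuous_on UNIV \<theta> \<and>
        (\<forall>x. (1 / norm (vector_derivative \<alpha> (at x))) *\<^sub>R vector_derivative \<alpha> (at x) = unit_vec (\<theta> x)) \<and>
        \<theta> L - \<theta> 0 = 2 * pi * real_of_int k"
      then obtain \<theta>1 where t1: "continuous_on UNIV \<theta>1"
        "\<And>x. (1 / norm (vector_derivative \<alpha> (at x))) *\<^sub>R vector_derivative \<alpha> (at x) = unit_vec (\<theta>1 x)"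
        "\<theta>1 L - \<theta>1 0 = 2 * pi * real_of_int k" by blast
      define g where "g x = (\<theta>1 x - \<theta> x) / (2*pi)" for x
      have gi: "g x \<in> \<int>" for x
      proof -
        have "unit_vec (\<theta>1 x) = unit_vec (\<theta> x)" using t1(2)[of x] tang[of x] by simp
        then obtain j :: int where "\<theta>1 x - \<theta> x = 2*pi*j" using unit_vec_eq by blast
        then have "g x = j" by (simp add: g_def)
        then show ?thesis by simp
      qed
      have gc: "continuous_on UNIV g" unfolding g_def[abs_def] using t1(1) ct by (intro continuous_intros) auto
      have "g L = g 0" by (rule cont_int_const[OF gc gi])
      then have "\<theta>1 L - \<theta> L = \<theta>1 0 - \<theta> 0" by (simp add: g_def)
      then have "2*pi*real_of_int k = 2*pi*real_of_int p1" using t1(3) tL by linarith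
      then show "k = p1" by simp
    qed
    then have "p1 \<noteq> 0" using rot by simp
    then show ?thesis using p1 p2 p12 by blast
  qed
  then obtain p :: int where p: "p \<noteq> (0::int)" "\<psi> L - \<psi> 0 = 2*pi*p" "\<psi>tilde L - \<psi>tilde 0 = 2*pi*p"
    by blast
  have big: "2*pi \<le> \<bar>\<psi> L - \<psi> 0\<bar>" "2*pi \<le> \<bar>\<psi>tilde L - \<psi>tilde 0\<bar>"
  proof -
    have "1 \<le> \<bar>p\<bar>" using p(1) by linarith
    then have p1: "1 \<le> \<bar>real_of_int p\<bar>" by (metis of_int_1_le_iff of_int_abs)
    have "2*pi*1 \<le> 2*pi*\<bar>real_of_int p\<bar>" using mult_left_mono[OF p1, of "2*pi"] by simp
    moreover have "\<bar>2*pi*real_of_int p\<bar> = 2*pi*\<bar>real_of_int p\<bar>"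
      by (simp add: abs_mult)
    ultimately show "2*pi \<le> \<bar>\<psi> L - \<psi> 0\<bar>" "2*pi \<le> \<bar>\<psi>tilde L - \<psi>tilde 0\<bar>"
      unfolding p(2,3) by simp_all
  qed
  have sz: "sin ((y - (y + 2*pi*k))/2) = 0" "sin (((y + 2*pi*k) - y)/2) = 0" for y and k :: int
  proof -
    have "(y - (y + 2*pi*k))/2 = of_int (-k) * pi" "((y + 2*pi*k) - y)/2 = of_int k * pi" by simp_all
    then show "sin ((y - (y + 2*pi*k))/2) = 0" "sin (((y + 2*pi*k) - y)/2) = 0"
      unfolding sin_zero_iff_int2 by blast+
  qed
  have dep: "ps' x = ps' y" if "\<psi> x = \<psi> y" for x y
  proof -
    obtain v and k :: int where v: "\<psi>tilde v = \<psi> x + 2*pi*k"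
      using surj_mod[OF cp(2) less_imp_le[OF L_pos] big(2), of "\<psi> x"] by blast
    have "ps' x = pt' v" by (rule C1) (use sz v in simp)
    moreover have "ps' y = pt' v" by (rule C1) (use sz v that in simp)
    ultimately show ?thesis by simp
  qed
  have match: "\<exists>u. pt' v = ps' u" for v
  proof -
    obtain u and k :: int where u: "\<psi> u = \<psi>tilde v + 2*pi*k"
      using surj_mod[OF cp(1) less_imp_le[OF L_pos] big(1), of "\<psi>tilde v"] by blast
    have "ps' u = pt' v" by (rule C1) (use sz u in simp)
    then show ?thesis by metis
  qed
  have sc: "(\<forall>x. ps' x \<ge> 0) \<or> (\<forall>x. ps' x \<le> 0)" by (rule sign_const[OF dp dep])
  then show ?thesis
  proof
    assume h: "\<forall>x. ps' x \<ge> 0"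
    have h': "pt' x \<ge> 0" for x
    proof -
      obtain u where "pt' x = ps' u" using match by blast
      then show ?thesis using h by simp
    qed
    have "\<psi> x \<le> \<psi> y" if "x \<le> y" for x y
      by (rule DERIV_nonneg_imp_nondecreasing[OF that]) (use dp h in blast)
    then have "mono \<psi>" by (rule monoI)
    moreover have "\<psi>tilde x \<le> \<psi>tilde y" if "x \<le> y" for x y
      by (rule DERIV_nonneg_imp_nondecreasing[OF that]) (use dq h' in blast)
    then have "mono \<psi>tilde" by (rule monoI)
    ultimately show ?thesis by simp
  next
    assume h: "\<forall>x. ps' x \<le> 0"
    have h': "pt' x \<le> 0" for x
    proof -
      obtain u where "pt' x = ps' u" using match by blast
      then show ?thesis using h by simp
    qed
    have "\<psi> y \<le> \<psi> x" if "x \<le> y" for x y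
      by (rule DERIV_nonpos_imp_nonincreasing[OF that]) (use dp h in blast)
    then have "antimono \<psi>" by (rule antimonoI)
    moreover have "\<psi>tilde y \<le> \<psi>tilde x" if "x \<le> y" for x y
      by (rule DERIV_nonpos_imp_nonincreasing[OF that]) (use dq h' in blast)
    then have "antimono \<psi>tilde" by (rule antimonoI)
    ultimately show ?thesis by simp
  qed
qed

end
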